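(* Let $d\ge2$, $n\ge1$, $N=nd$, $F\in[0,1)$ with $F\neq2^{-N}$, and let $\rho_x=U(x)\rho_0U(x)^\dagger$ where $\rho_0$ is the $N$-qubit depolarized GHZ state with fidelity $F$. Let $M=\sigma_x^{\otimes N}$ and, for $x$ with $v_1\cdot\nabla_x\langle M\rangle\ne0$, define $$\mathrm{Var}_M(x)=\frac{\langle M^2\rangle-\langle M\rangle^2}{\big|v_1\cdot\nabla_x\langle M\rangle\big|^2},\qquad \langle A\rangle=\mathrm{Tr}(\rho_xA),\ v_1=\tfrac1{\sqrt d}(1,\dots,1)^T.$$ Then, with $\theta_1=v_1^Tx$ and $c=F-\frac{1-F}{2^N-1}$, $$\mathrm{Var}_M(x)=\frac{1-c^2\cos^2(n\sqrt d\,\theta_1)}{d\,n^2c^2\sin^2(n\sqrt d\,\theta_1)},$$ and in particular $\mathrm{Var}_M(x)\to+\infty$ as $x\to0$.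
   Context: Setting: $d$ nodes with $n$ qubits each, qubits labelled $(i,k)$; $U(x)=\exp[-i\sum_{i=0}^{d-1}x_iH_i]$ with $H_i=\frac12\sum_{k=0}^{n-1}\sigma_z^{(i,k)}$, $x\in\mathbb{R}^d$. The $N$-qubit depolarized GHZ state with fidelity $F$ is $F|\mathrm{GHZ}_N\rangle\langle\mathrm{GHZ}_N|+\frac{1-F}{2^N-1}(I-|\mathrm{GHZ}_N\rangle\langle\mathrm{GHZ}_N|)$, $|\mathrm{GHZ}_N\rangle=(|0\cdots0\rangle+|1\cdots1\rangle)/\sqrt2$. $\mathrm{Var}_M$ is the error-propagation estimation variance for $\theta_1$ from measuring $M$. *)

theory Defs
  imports "HOL-Analysis.Analysis"
begin

text \<open>Qubits are labelled (i,k) with i :: 'd (the d nodes, d = CARD('d)) and k < n.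
  Computational basis states are configurations s :: 'd \<times> nat \<Rightarrow> bool
  (s q = True means qubit q is in state |1>), supported on the qubit set.\<close>

type_synonym 'd cfg = "'d \<times> nat \<Rightarrow> bool"
type_synonym 'd op = "'d cfg \<Rightarrow> 'd cfg \<Rightarrow> complex"

definition qubits :: "nat \<Rightarrow> ('d::finite \<times> nat) set" where
  "qubits n = UNIV \<times> {..<n}"

definition cfgs :: "nat \<Rightarrow> ('d::finite) cfg set" where
  "cfgs n = {s. \<forall>q. q \<notin> qubits n \<longrightarrow> \<not> s q}"

definition mmul :: "nat \<Rightarrow> ('d::finite) op \<Rightarrow> 'd op \<Rightarrow> 'd op" where
  "mmul n A B = (\<lambda>a c. \<Sum>b\<in>cfgs n. A a b * B b c)"

definition adj :: "('d::finite) op \<Rightarrow> 'd op" where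
  "adj A = (\<lambda>a b. cnj (A b a))"

definition tr :: "nat \<Rightarrow> ('d::finite) op \<Rightarrow> complex" where
  "tr n A = (\<Sum>a\<in>cfgs n. A a a)"

definition idop :: "('d::finite) op" where
  "idop = (\<lambda>a b. if a = b then 1 else 0)"

text \<open>Single-qubit operators as 2x2 matrices indexed by bool (False = |0>, True = |1>).\<close>
definition sigma_x :: "bool \<Rightarrow> bool \<Rightarrow> complex" where
  "sigma_x a b = (if a \<noteq> b then 1 else 0)"

definition sigma_z :: "bool \<Rightarrow> bool \<Rightarrow> complex" where
  "sigma_z a b = (if a = b then (if a then -1 else 1) else 0)"

definition on_qubit :: "('d::finite \<times> nat) \<Rightarrow> (bool \<Rightarrow> bool \<Rightarrow> complex) \<Rightarrow> 'd op" where
  "on_qubit q A = (\<lambda>a b. if (\<forall>p. p \<noteq> q \<longrightarrow> a p = b p) then A (a q) (b q) else 0)"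

definition tensor_all :: "nat \<Rightarrow> (bool \<Rightarrow> bool \<Rightarrow> complex) \<Rightarrow> ('d::finite) op" where
  "tensor_all n A = (\<lambda>a b. \<Prod>q\<in>qubits n. A (a q) (b q))"

definition Hnode :: "nat \<Rightarrow> 'd::finite \<Rightarrow> 'd op" where
  "Hnode n i = (\<lambda>a b. (1/2) * (\<Sum>k<n. on_qubit (i,k) sigma_z a b))"

definition generator :: "nat \<Rightarrow> real^'d::finite \<Rightarrow> 'd op" where
  "generator n x = (\<lambda>a b. \<Sum>i\<in>UNIV. complex_of_real (x $ i) * Hnode n i a b)"

text \<open>U(x) = exp(-i sum_i x_i H_i); the generator is diagonal in the computational
  basis, so its exponential is the diagonal matrix of exponentials of its diagonal.\<close>
definition Uop :: "nat \<Rightarrow> real^'d::finite \<Rightarrow> 'd op" where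
  "Uop n x = (\<lambda>a b. if a = b then exp (- \<i> * generator n x a a) else 0)"

definition ghz_vec :: "nat \<Rightarrow> ('d::finite) cfg \<Rightarrow> complex" where
  "ghz_vec n s = (if s = (\<lambda>q. False) \<or> s = (\<lambda>q. q \<in> qubits n) then 1 / sqrt 2 else 0)"

definition ghz_proj :: "nat \<Rightarrow> ('d::finite) op" where
  "ghz_proj n = (\<lambda>a b. ghz_vec n a * cnj (ghz_vec n b))"

definition rho0 :: "nat \<Rightarrow> real \<Rightarrow> ('d::finite) op" where
  "rho0 n F = (let N = CARD('d) * n in
     (\<lambda>a b. complex_of_real F * ghz_proj n a b
        + complex_of_real ((1 - F) / (2 ^ N - 1)) * (idop a b - ghz_proj n a b)))"

definition rho_x :: "nat \<Rightarrow> real \<Rightarrow> real^'d::finite \<Rightarrow> 'd op" where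
  "rho_x n F x = mmul n (mmul n (Uop n x) (rho0 n F)) (adj (Uop n x))"

text \<open>Expectation value <A> = Tr(rho_x A) (real part; it is real for Hermitian A).\<close>
definition expect :: "nat \<Rightarrow> real \<Rightarrow> real^'d::finite \<Rightarrow> 'd op \<Rightarrow> real" where
  "expect n F x A = Re (tr n (mmul n (rho_x n F x) A))"

definition Mop :: "nat \<Rightarrow> ('d::finite) op" where
  "Mop n = tensor_all n sigma_x"

definition v1 :: "real^'d::finite" where
  "v1 = (\<chi> i. 1 / sqrt (real CARD('d)))"

definition dirM :: "nat \<Rightarrow> real \<Rightarrow> real^'d::finite \<Rightarrow> real" where
  "dirM n F x = frechet_derivative (\<lambda>y. expect n F y (Mop n)) (at x) v1"

definition VarM :: "nat \<Rightarrow> real \<Rightarrow> real^'d::finite \<Rightarrow> real" where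
  "VarM n F x = (expect n F x (mmul n (Mop n) (Mop n)) - (expect n F x (Mop n))\<^sup>2)
                 / \<bar>dirM n F x\<bar>\<^sup>2"

end

theory Submission
  imports Defs
begin

lemma finite_qubits: "finite (qubits n :: ('d::finite \<times> nat) set)"
  by (simp add: qubits_def)

lemma card_qubits: "card (qubits n :: ('d::finite \<times> nat) set) = CARD('d) * n"
  by (simp add: qubits_def card_cartesian_product)

lemma cfgs_image: "cfgs n = (\<lambda>A q. q \<in> A) ` Pow (qubits n :: ('d::finite \<times> nat) set)"
proof (rule set_eqI, rule iffI)
  fix s :: "'d cfg" assume "s \<in> cfgs n"
  then have "s = (\<lambda>q. q \<in> {q. s q})" "{q. s q} \<in> Pow (qubits n)"
    by (auto simp: cfgs_def)
  then show "s \<in> (\<lambda>A q. q \<in> A) ` Pow (qubits n)" by blast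
qed (auto simp: cfgs_def)

lemma finite_cfgs: "finite (cfgs n :: ('d::finite) cfg set)"
  by (simp add: cfgs_image finite_qubits)

lemma card_cfgs: "card (cfgs n :: ('d::finite) cfg set) = 2 ^ (CARD('d) * n)"
proof -
  have "inj_on (\<lambda>A q. q \<in> A) (Pow (qubits n :: ('d::finite \<times> nat) set))"
    by (rule inj_onI) (metis Collect_mem_eq)
  then show ?thesis
    by (simp add: cfgs_image card_image card_Pow finite_qubits card_qubits)
qed

definition compl :: "nat \<Rightarrow> ('d::finite) cfg \<Rightarrow> 'd cfg" where
  "compl n a = (\<lambda>q. q \<in> qubits n \<and> \<not> a q)"

definition uu :: "nat \<Rightarrow> real^'d::finite \<Rightarrow> 'd cfg \<Rightarrow> complex" where
  "uu n x a = exp (- \<i> * generator n x a a)"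

lemma mmul_Uleft: "mmul n (Uop n x) R a b = (if a \<in> cfgs n then uu n x a * R a b else 0)"
  unfolding mmul_def Uop_def uu_def
  by (simp add: if_distrib[where f="\<lambda>z. z * _"] sum.delta finite_cfgs cong: if_cong)

lemma mult_if0: "(c::complex) * (if P then y else 0) = (if P then c*y else 0)" by simp

lemma mmul_Uright: "mmul n R (adj (Uop n x)) a b = (if b \<in> cfgs n then R a b * cnj (uu n x b) else 0)"
  unfolding mmul_def Uop_def uu_def adj_def
  by (simp add: if_distrib[where f="cnj"] mult_if0 sum.delta' finite_cfgs cong: if_cong)

lemma rho_x_eq: "rho_x n F x a c = (if a \<in> cfgs n \<and> c \<in> cfgs n then uu n x a * rho0 n F a c * cnj (uu n x c) else 0)"
  unfolding rho_x_def mmul_Uright mmul_Uleft by auto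

lemma sum_sign_real: "(\<Sum>k<(n::nat). if P k then -1 else 1 :: complex) = complex_of_real (\<Sum>k<n. if P k then -1 else 1)"
  by (induct n) auto

lemma gen_real: "generator n x a a = complex_of_real (\<Sum>i\<in>UNIV. x $ i * (1/2 * (\<Sum>k<n. if a (i,k) then -1 else 1)))"
  unfolding generator_def Hnode_def on_qubit_def sigma_z_def
  by (simp add: of_real_sum sum_sign_real)

lemma exp_cis: "exp (- \<i> * complex_of_real r) = cis (-r)"
  by (simp add: cis_conv_exp)

lemma exp_cnj1: "exp (- \<i> * complex_of_real r) * cnj (exp (- \<i> * complex_of_real r)) = 1"
  unfolding exp_cis by (simp add: cis_cnj cis_mult)

lemma uu_cnj: "uu n x a * cnj (uu n x a) = 1"
  unfolding uu_def gen_real by (rule exp_cnj1)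

definition z1 :: "nat \<Rightarrow> ('d::finite) cfg" where "z1 n = (\<lambda>q. q \<in> qubits n)"

lemma compl_cfgs: "compl n a \<in> cfgs n"
  by (simp add: compl_def cfgs_def)

lemma compl_compl: "a \<in> cfgs n \<Longrightarrow> compl n (compl n a) = a"
  by (auto simp: compl_def cfgs_def fun_eq_iff)

lemma qubits_ne: "n \<ge> 1 \<Longrightarrow> (i, 0) \<in> qubits n"
  by (simp add: qubits_def)

lemma compl_neq: "n \<ge> 1 \<Longrightarrow> compl n a \<noteq> a"
proof
  assume "n \<ge> 1" "compl n a = a"
  then have "compl n a (undefined, 0) = a (undefined, 0)" by simp
  then show False using \<open>n \<ge> 1\<close> by (auto simp: compl_def qubits_def)
qed

lemma z0_cfgs: "(\<lambda>q. False) \<in> cfgs n" by (simp add: cfgs_def)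
lemma z1_cfgs: "z1 n \<in> cfgs n" by (simp add: cfgs_def z1_def)
lemma compl_z0: "compl n (\<lambda>q. False) = z1 n" by (simp add: compl_def z1_def)
lemma compl_z1: "compl n (z1 n) = (\<lambda>q. False)" by (simp add: compl_def z1_def)
lemma z01_neq:
  fixes n :: nat assumes "n \<ge> 1" shows "(\<lambda>q. False) \<noteq> (z1 n :: ('d::finite) cfg)"
proof
  assume h: "(\<lambda>q. False) = (z1 n :: 'd cfg)"
  have "(z1 n :: 'd cfg) (undefined, 0)" using assms by (simp add: z1_def qubits_def)
  moreover have "\<not> (z1 n :: 'd cfg) (undefined, 0)" unfolding h[symmetric] by simp
  ultimately show False by blast
qed

lemma M_eq:
  assumes "a \<in> cfgs n" "b \<in> cfgs n"
  shows "Mop n b a = (if b = compl n a then 1 else 0)"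
proof (cases "b = compl n a")
  case True
  have "\<forall>q\<in>qubits n. sigma_x (b q) (a q) = 1"
    unfolding True by (simp add: sigma_x_def compl_def)
  then have "Mop n b a = 1"
    unfolding Mop_def tensor_all_def by (rule prod.neutral)
  then show ?thesis using True by simp
next
  case False
  have "\<exists>q. b q \<noteq> compl n a q"
  proof (rule ccontr)
    assume "\<not> (\<exists>q. b q \<noteq> compl n a q)"
    then have "\<forall>q. b q = compl n a q" by blast
    then have "b = compl n a" unfolding fun_eq_iff .
    with False show False by simp
  qed
  then obtain q where q: "b q \<noteq> compl n a q" by blast
  have "q \<in> qubits n"
  proof (rule ccontr)
    assume nq: "q \<notin> qubits n"
    have "\<not> b q" using assms(2) nq unfolding cfgs_def by blast
    moreover have "\<not> compl n a q" using nq by (simp add: compl_def)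
    ultimately show False using q by simp
  qed
  moreover have "sigma_x (b q) (a q) = 0" using q \<open>q \<in> qubits n\<close> by (auto simp: sigma_x_def compl_def)
  ultimately have "Mop n b a = 0"
    unfolding Mop_def tensor_all_def by (meson finite_qubits prod_zero_iff)
  then show ?thesis using False by simp
qed

lemma tr_M: fixes R :: "('d::finite) op" shows "tr n (mmul n R (Mop n)) = (\<Sum>a\<in>cfgs n. R a (compl n a))"
  unfolding tr_def mmul_def
proof (rule sum.cong[OF refl])
  fix a :: "'d cfg" assume a: "a \<in> cfgs n"
  have "(\<Sum>b\<in>cfgs n. R a b * Mop n b a) = (\<Sum>b\<in>cfgs n. if b = compl n a then R a b else 0)"
    by (rule sum.cong[OF refl]) (simp add: M_eq a)
  also have "\<dots> = R a (compl n a)"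
    by (simp add: sum.delta' finite_cfgs compl_cfgs)
  finally show "(\<Sum>b\<in>cfgs n. R a b * Mop n b a) = R a (compl n a)" .
qed

lemma M_eq':
  assumes "a \<in> cfgs n" "b \<in> cfgs n"
  shows "Mop n b a = (if a = compl n b then 1 else 0)"
proof -
  have "(b = compl n a) = (a = compl n b)"
    using assms compl_compl by metis
  then show ?thesis using M_eq[OF assms] by simp
qed

lemma MM_eq:
  fixes a b :: "('d::finite) cfg"
  assumes "a \<in> cfgs n" "b \<in> cfgs n"
  shows "mmul n (Mop n) (Mop n) b a = (if b = a then 1 else 0)"
proof -
  have "mmul n (Mop n) (Mop n) b a = (\<Sum>c\<in>cfgs n. if c = compl n b then Mop n c a else 0)"
    unfolding mmul_def
  proof (rule sum.cong[OF refl])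
    fix c :: "'d cfg" assume "c \<in> cfgs n"
    then show "Mop n b c * Mop n c a = (if c = compl n b then Mop n c a else 0)"
      using M_eq'[OF _ assms(2), of c] by simp
  qed
  also have "\<dots> = Mop n (compl n b) a"
    by (simp add: sum.delta' finite_cfgs compl_cfgs)
  also have "\<dots> = (if a = compl n (compl n b) then 1 else 0)"
    by (rule M_eq'[OF assms(1) compl_cfgs])
  also have "\<dots> = (if b = a then 1 else 0)"
    using assms by (auto simp: compl_compl)
  finally show ?thesis .
qed

lemma tr_MM: fixes R :: "('d::finite) op" shows "tr n (mmul n R (mmul n (Mop n) (Mop n))) = (\<Sum>a\<in>cfgs n. R a a)"
  unfolding tr_def mmul_def[of n R]
proof (rule sum.cong[OF refl])
  fix a :: "'d cfg" assume a: "a \<in> cfgs n"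
  have "(\<Sum>b\<in>cfgs n. R a b * mmul n (Mop n) (Mop n) b a) = (\<Sum>b\<in>cfgs n. if b = a then R a b else 0)"
    by (rule sum.cong[OF refl]) (simp add: MM_eq a)
  also have "\<dots> = R a a"
    using a by (simp add: sum.delta' finite_cfgs)
  finally show "(\<Sum>b\<in>cfgs n. R a b * mmul n (Mop n) (Mop n) b a) = R a a" .
qed

lemma lin_aux: "a \<noteq> c \<Longrightarrow> (f::complex) * g + p * ((if a = c then 1 else 0) - g) = (f - p) * g"
  by (simp add: algebra_simps)

lemma rho0_off: "a \<noteq> c \<Longrightarrow> rho0 n F a c =
   complex_of_real (F - (1 - F) / (2 ^ (CARD('d) * n) - 1)) * ghz_proj n a c"
  for a c :: "('d::finite) cfg"
  unfolding rho0_def Let_def idop_def of_real_diff by (rule lin_aux)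

lemma rho0_diag: "rho0 n F a a =
   complex_of_real F * ghz_proj n a a + complex_of_real ((1 - F) / (2 ^ (CARD('d) * n) - 1)) * (1 - ghz_proj n a a)"
  for a :: "('d::finite) cfg"
  by (simp add: rho0_def idop_def Let_def)

lemma gp_zero: "a \<noteq> (\<lambda>q. False) \<Longrightarrow> a \<noteq> z1 n \<Longrightarrow> ghz_proj n a b = 0"
  by (simp add: ghz_proj_def ghz_vec_def z1_def)

lemma sq2: "(complex_of_real (sqrt 2))^2 = 2"
proof -
  have "(complex_of_real (sqrt 2))^2 = complex_of_real ((sqrt 2)^2)" by (rule of_real_power[symmetric])
  then show ?thesis by simp
qed

lemma gp_01: "ghz_proj n (\<lambda>q. False) (z1 n) = 1/2" "ghz_proj n (z1 n) (\<lambda>q. False) = 1/2"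
  "ghz_proj n (\<lambda>q. False) (\<lambda>q. False) = 1/2" "ghz_proj n (z1 n) (z1 n) = 1/2"
  by (simp_all add: ghz_proj_def ghz_vec_def z1_def power2_eq_square[symmetric] sq2)

lemma gen_z0: "generator n x (\<lambda>q. False) (\<lambda>q. False) = complex_of_real (real n * (\<Sum>i\<in>UNIV. x $ i) / 2)"
proof -
  have "(\<Sum>i\<in>UNIV. x $ i * (1/2 * (\<Sum>k<n. if (\<lambda>q. False) (i,k) then -1 else 1 :: real)))
      = (\<Sum>i\<in>UNIV. x $ i * (real n / 2))" by simp
  also have "\<dots> = real n * (\<Sum>i\<in>UNIV. x $ i) / 2" unfolding sum_distrib_right[symmetric] by simp
  finally have h: "(\<Sum>i\<in>UNIV. x $ i * (1/2 * (\<Sum>k<n. if (\<lambda>q. False) (i,k) then -1 else 1 :: real))) = real n * (\<Sum>i\<in>UNIV. x $ i) / 2" .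
  show ?thesis unfolding gen_real h ..
qed

lemma sum_z1: "(\<Sum>k<n. if z1 n (i, k) then -1 else 1 :: real) = - real n"
proof -
  have "(\<Sum>k<n. if z1 n (i, k) then -1 else 1 :: real) = (\<Sum>k<n. -1)"
    by (rule sum.cong) (auto simp: z1_def qubits_def)
  then show ?thesis by simp
qed

lemma gen_z1: "generator n x (z1 n) (z1 n) = complex_of_real (- (real n * (\<Sum>i\<in>UNIV. x $ i) / 2))"
proof -
  have "(\<Sum>i\<in>UNIV. x $ i * (1/2 * (\<Sum>k<n. if z1 n (i,k) then -1 else 1 :: real)))
      = (\<Sum>i\<in>UNIV. x $ i * (- real n / 2))" by (simp add: sum_z1)
  also have "\<dots> = - (real n * (\<Sum>i\<in>UNIV. x $ i) / 2)" unfolding sum_distrib_right[symmetric] by simp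
  finally have h: "(\<Sum>i\<in>UNIV. x $ i * (1/2 * (\<Sum>k<n. if z1 n (i,k) then -1 else 1 :: real))) = - (real n * (\<Sum>i\<in>UNIV. x $ i) / 2)" .
  show ?thesis unfolding gen_real h ..
qed

lemma uu_z0: "uu n x (\<lambda>q. False) = cis (- (real n * (\<Sum>i\<in>UNIV. x $ i) / 2))"
  unfolding uu_def gen_z0 exp_cis ..

lemma uu_z1: "uu n x (z1 n) = cis (real n * (\<Sum>i\<in>UNIV. x $ i) / 2)"
  unfolding uu_def gen_z1 exp_cis by simp



lemma t1: "n \<ge> 1 \<Longrightarrow> a \<noteq> compl n a" by (rule not_sym[OF compl_neq])
lemma t4: "a \<noteq> compl n a \<Longrightarrow> a \<noteq> (\<lambda>q. False) \<Longrightarrow> a \<noteq> z1 n \<Longrightarrow> rho0 n F a (compl n a) = 0"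
  using rho0_off gp_zero by (metis mult_zero_right)
lemma t5: "rho0 n F a (compl n a) = 0 \<Longrightarrow> rho_x n F x a (compl n a) = 0" by (simp add: rho_x_eq)

lemma sum_restrict:
  fixes x :: "real^'d::finite"
  assumes "n \<ge> 1"
  shows "(\<Sum>a\<in>(cfgs n :: 'd cfg set). rho_x n F x a (compl n a)) = (\<Sum>a\<in>{(\<lambda>q. False), z1 n}. rho_x n F x a (compl n a))"
proof (rule sum.mono_neutral_right[OF finite_cfgs])
  show "{(\<lambda>q. False), z1 n} \<subseteq> cfgs n" by (simp add: z0_cfgs z1_cfgs)
  show "\<forall>a\<in>cfgs n - {(\<lambda>q. False), z1 n}. rho_x n F x a (compl n a) = 0"
  proof
    fix a :: "'d cfg" assume a: "a \<in> cfgs n - {(\<lambda>q. False), z1 n}"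
    have a0: "a \<noteq> (\<lambda>q. False)" "a \<noteq> z1 n" using a by blast+
    show "rho_x n F x a (compl n a) = 0" by (rule t5[OF t4[OF t1[OF assms] a0]])
  qed
qed

lemma cis_half: "cis (- (a / 2)) * cis (- (a / 2)) = cis (- a)" "cis (a / 2) * cis (a / 2) = cis a"
  by (simp_all add: cis_mult)

lemma s1: "rho_x n F x ((\<lambda>q. False) :: 'd cfg) (z1 n :: 'd cfg) = uu n x ((\<lambda>q. False) :: 'd cfg) * rho0 n F ((\<lambda>q. False) :: 'd cfg) (z1 n :: 'd cfg) * cnj (uu n x (z1 n :: 'd cfg))"
  for x :: "real^'d::finite"
  unfolding rho_x_eq by (rule if_P) (use z0_cfgs z1_cfgs in blast)

lemma s1': "rho_x n F x (z1 n :: 'd cfg) ((\<lambda>q. False) :: 'd cfg) = uu n x (z1 n :: 'd cfg) * rho0 n F (z1 n :: 'd cfg) ((\<lambda>q. False) :: 'd cfg) * cnj (uu n x ((\<lambda>q. False) :: 'd cfg))"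
  for x :: "real^'d::finite"
  unfolding rho_x_eq by (rule if_P) (use z0_cfgs z1_cfgs in blast)

lemma s2: "n \<ge> 1 \<Longrightarrow> rho0 n F ((\<lambda>q. False) :: 'd::finite cfg) (z1 n :: 'd cfg) = complex_of_real (F - (1 - F) / (2 ^ (CARD('d::finite) * n) - 1)) * (1/2)"
  by (simp only: rho0_off[OF z01_neq] gp_01)

lemma s2': "n \<ge> 1 \<Longrightarrow> rho0 n F (z1 n :: 'd::finite cfg) ((\<lambda>q. False) :: 'd cfg) = complex_of_real (F - (1 - F) / (2 ^ (CARD('d::finite) * n) - 1)) * (1/2)"
  by (simp only: rho0_off[OF not_sym[OF z01_neq]] gp_01)

lemma s4: "uu n x ((\<lambda>q. False) :: 'd cfg) * cnj (uu n x (z1 n :: 'd cfg)) = cis (- (real n * (\<Sum>i\<in>UNIV. x $ i)))"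
  for x :: "real^'d::finite"
  unfolding uu_z0 uu_z1 cis_cnj cis_mult by simp

lemma s4': "uu n x (z1 n :: 'd cfg) * cnj (uu n x ((\<lambda>q. False) :: 'd cfg)) = cis (real n * (\<Sum>i\<in>UNIV. x $ i))"
  for x :: "real^'d::finite"
  unfolding uu_z0 uu_z1 cis_cnj cis_mult by simp

lemma sum2: "n \<ge> 1 \<Longrightarrow> (\<Sum>a\<in>{((\<lambda>q. False) :: 'd::finite cfg), (z1 n :: 'd cfg)}. g a) = g ((\<lambda>q. False) :: 'd cfg) + g (z1 n :: 'd cfg)"
proof -
  assume n1: "n \<ge> 1"
  have "((\<lambda>q. False) :: 'd cfg) \<notin> {z1 n}" using z01_neq[OF n1] by simp
  then show ?thesis by simp
qed

lemma cis_pm: "cis (- t) + cis t = complex_of_real (2 * cos t)"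
  by (simp add: complex_eq_iff)

lemma half_aux: "complex_of_real c * (1/2) * complex_of_real (2*k) = complex_of_real (c*k)"
  by simp

lemma expect_M:
  fixes x :: "real^'d::finite"
  assumes "n \<ge> 1"
  shows "expect n F x (Mop n) = (F - (1 - F) / (2 ^ (CARD('d) * n) - 1)) * cos (real n * (\<Sum>i\<in>UNIV. x $ i))"
proof -
  let ?c = "complex_of_real (F - (1 - F) / (2 ^ (CARD('d) * n) - 1))"
  let ?t = "real n * (\<Sum>i\<in>UNIV. x $ i)"
  have "tr n (mmul n (rho_x n F x) (Mop n)) = rho_x n F x ((\<lambda>q. False) :: 'd cfg) (compl n ((\<lambda>q. False) :: 'd cfg)) + rho_x n F x (z1 n :: 'd cfg) (compl n (z1 n :: 'd cfg))"
    unfolding tr_M sum_restrict[OF assms] sum2[OF assms] ..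
  also have "\<dots> = rho_x n F x ((\<lambda>q. False) :: 'd cfg) (z1 n :: 'd cfg) + rho_x n F x (z1 n :: 'd cfg) ((\<lambda>q. False) :: 'd cfg)"
    unfolding compl_z0 compl_z1 ..
  also have "\<dots> = ?c * (1/2) * (uu n x ((\<lambda>q. False) :: 'd cfg) * cnj (uu n x (z1 n :: 'd cfg))) + ?c * (1/2) * (uu n x (z1 n :: 'd cfg) * cnj (uu n x ((\<lambda>q. False) :: 'd cfg)))"
    unfolding s1 s1' s2[OF assms] s2'[OF assms] by (simp only: mult_ac)
  also have "\<dots> = ?c * (1/2) * (cis (- ?t) + cis ?t)"
    unfolding s4 s4' by (simp only: distrib_left)
  also have "\<dots> = complex_of_real ((F - (1 - F) / (2 ^ (CARD('d) * n) - 1)) * cos ?t)"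
    unfolding cis_pm half_aux ..
  finally show ?thesis unfolding expect_def by (simp only: Re_complex_of_real)
qed

lemma sum_gp:
  assumes "n \<ge> 1"
  shows "(\<Sum>a\<in>(cfgs n :: ('d::finite) cfg set). ghz_proj n a a) = 1"
proof -
  have "(\<Sum>a\<in>(cfgs n :: 'd cfg set). ghz_proj n a a) = (\<Sum>a\<in>{((\<lambda>q. False) :: 'd cfg), (z1 n :: 'd cfg)}. ghz_proj n a a)"
  proof (rule sum.mono_neutral_right[OF finite_cfgs])
    show "{((\<lambda>q. False) :: 'd cfg), z1 n} \<subseteq> cfgs n" by (simp add: z0_cfgs z1_cfgs)
    show "\<forall>a\<in>cfgs n - {((\<lambda>q. False) :: 'd cfg), z1 n}. ghz_proj n a a = 0"
    proof
      fix a :: "'d cfg" assume a: "a \<in> cfgs n - {(\<lambda>q. False), z1 n}"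
      have a0: "a \<noteq> (\<lambda>q. False)" "a \<noteq> z1 n" using a by blast+
      show "ghz_proj n a a = 0" by (rule gp_zero[OF a0])
    qed
  qed
  also have "\<dots> = 1" unfolding sum2[OF assms] gp_01 by simp
  finally show ?thesis .
qed

lemma rho_diag_sum:
  fixes x :: "real^'d::finite"
  shows "(\<Sum>a\<in>(cfgs n :: 'd cfg set). rho_x n F x a a) = (\<Sum>a\<in>(cfgs n :: 'd cfg set). rho0 n F a a)"
proof (rule sum.cong[OF refl])
  fix a :: "'d cfg" assume a: "a \<in> cfgs n"
  have "rho_x n F x a a = uu n x a * rho0 n F a a * cnj (uu n x a)"
    unfolding rho_x_eq using a by simp
  also have "\<dots> = rho0 n F a a * (uu n x a * cnj (uu n x a))" by (simp only: mult_ac)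
  finally show "rho_x n F x a a = rho0 n F a a" unfolding uu_cnj by simp
qed

lemma lin_sum: "(\<Sum>a\<in>A. (f::complex) * g a + p * (1 - g a)) = f * sum g A + p * (of_nat (card A) - sum g A)"
  by (simp add: sum.distrib sum_distrib_left[symmetric] sum_subtractf)

lemma expect_MM:
  fixes x :: "real^'d::finite"
  assumes "n \<ge> 1"
  shows "expect n F x (mmul n (Mop n) (Mop n)) = 1"
proof -
  let ?N = "CARD('d) * n"
  let ?p = "(1 - F) / (2 ^ ?N - 1)"
  have N1: "?N \<ge> 1" using assms by simp
  have pos: "(2::real) ^ ?N - 1 \<noteq> 0"
  proof -
    have "(2::real) ^ ?N \<ge> 2 ^ 1" by (rule power_increasing[OF N1]) simp
    then show ?thesis by simp
  qed
  have "tr n (mmul n (rho_x n F x) (mmul n (Mop n) (Mop n))) = (\<Sum>a\<in>(cfgs n :: 'd cfg set). rho0 n F a a)"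
    unfolding tr_MM rho_diag_sum ..
  also have "\<dots> = (\<Sum>a\<in>(cfgs n :: 'd cfg set). complex_of_real F * ghz_proj n a a + complex_of_real ?p * (1 - ghz_proj n a a))"
    unfolding rho0_diag ..
  also have "\<dots> = complex_of_real F * (\<Sum>a\<in>(cfgs n :: 'd cfg set). ghz_proj n a a) + complex_of_real ?p * (of_nat (card (cfgs n :: 'd cfg set)) - (\<Sum>a\<in>(cfgs n :: 'd cfg set). ghz_proj n a a))"
    by (rule lin_sum)
  also have "\<dots> = complex_of_real (F + ?p * (2 ^ ?N - 1))"
    unfolding sum_gp[OF assms] card_cfgs by (simp only: of_real_add of_real_mult of_real_diff of_real_1 of_real_power of_real_numeral of_nat_power of_nat_numeral mult_1_right)
  also have "F + ?p * (2 ^ ?N - 1) = 1" using pos by auto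
  finally show ?thesis unfolding expect_def by simp
qed

lemma S_v1: "(\<Sum>i\<in>UNIV. (v1 :: real^'d::finite) $ i) = sqrt (real CARD('d))"
proof -
  have "(\<Sum>i\<in>UNIV. (v1 :: real^'d) $ i) = real CARD('d) * (1 / sqrt (real CARD('d)))"
    by (simp add: v1_def)
  also have "\<dots> = sqrt (real CARD('d))" by (simp add: real_div_sqrt)
  finally show ?thesis .
qed

lemma theta_eq: "sqrt (real CARD('d)) * ((v1 :: real^'d::finite) \<bullet> x) = (\<Sum>i\<in>UNIV. x $ i)"
proof -
  have "(v1 :: real^'d) \<bullet> x = (\<Sum>i\<in>UNIV. (1 / sqrt (real CARD('d))) * x $ i)"
    by (simp add: inner_vec_def v1_def)
  also have "\<dots> = (\<Sum>i\<in>UNIV. x $ i) / sqrt (real CARD('d))"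
    by (simp add: sum_divide_distrib)
  finally show ?thesis by simp
qed

lemma hasderS: "((\<lambda>y::real^'d::finite. \<Sum>i\<in>UNIV. y $ i) has_derivative (\<lambda>h. \<Sum>i\<in>UNIV. h $ i)) (at x)"
  by (rule bounded_linear_imp_has_derivative) (intro bounded_linear_sum bounded_linear_vec_nth)

lemma hasderE:
  "((\<lambda>y::real^'d::finite. C * cos (real n * (\<Sum>i\<in>UNIV. y $ i))) has_derivative
        (\<lambda>h. C * (real n * (\<Sum>i\<in>UNIV. h $ i) * - sin (real n * (\<Sum>i\<in>UNIV. x $ i))))) (at x)"
  by (intro has_derivative_mult_right has_derivative_cos hasderS)

lemma dirM_eq:
  fixes x :: "real^'d::finite"
  assumes "n \<ge> 1"
  shows "dirM n F x = (F - (1 - F) / (2 ^ (CARD('d) * n) - 1)) * (real n * sqrt (real CARD('d)) * - sin (real n * (\<Sum>i\<in>UNIV. x $ i)))"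
proof -
  let ?C = "F - (1 - F) / (2 ^ (CARD('d) * n) - 1)"
  have fe: "(\<lambda>y. expect n F y (Mop n)) = (\<lambda>y::real^'d. ?C * cos (real n * (\<Sum>i\<in>UNIV. y $ i)))"
    by (rule ext) (rule expect_M[OF assms])
  have "frechet_derivative (\<lambda>y. expect n F y (Mop n)) (at x) =
        (\<lambda>h. ?C * (real n * (\<Sum>i\<in>UNIV. h $ i) * - sin (real n * (\<Sum>i\<in>UNIV. x $ i))))"
    unfolding fe by (rule frechet_derivative_at[OF hasderE, symmetric])
  then show ?thesis unfolding dirM_def by (simp add: S_v1)
qed

theorem mainTheorem7:
  fixes n :: nat and F :: real
  assumes "CARD('d::finite) \<ge> 2" and "n \<ge> 1"
    and "0 \<le> F" and "F < 1" and "F \<noteq> 1 / 2 ^ (CARD('d) * n)"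
  shows "(\<forall>x :: real^'d. dirM n F x \<noteq> 0 \<longrightarrow>
           (let d = real CARD('d); \<theta> = v1 \<bullet> x;
                c = F - (1 - F) / (2 ^ (CARD('d) * n) - 1) in
            VarM n F x = (1 - c\<^sup>2 * (cos (real n * sqrt d * \<theta>))\<^sup>2)
                         / (d * (real n)\<^sup>2 * c\<^sup>2 * (sin (real n * sqrt d * \<theta>))\<^sup>2)))
       \<and> filterlim (VarM n F :: real^'d \<Rightarrow> real) at_top
                   (at 0 within {x. dirM n F x \<noteq> 0})"
proof -
  let ?C = "F - (1 - F) / (2 ^ (CARD('d) * n) - 1)"
  let ?d = "real CARD('d)"
  define T where "T = (\<lambda>x::real^'d. real n * (\<Sum>i\<in>UNIV. x $ i))"
  have dpos: "?d > 0" using assms(1) by simp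
  have dir: "dirM n F x = ?C * (real n * sqrt ?d * - sin (T x))" for x :: "real^'d"
    unfolding T_def by (rule dirM_eq[OF assms(2)])
  have dir2: "\<bar>dirM n F x\<bar>\<^sup>2 = ?d * (real n)\<^sup>2 * ?C\<^sup>2 * (sin (T x))\<^sup>2" for x :: "real^'d"
    unfolding dir power2_abs using dpos by (simp add: power_mult_distrib)
  have VarM_eq: "VarM n F x = (1 - ?C\<^sup>2 * (cos (T x))\<^sup>2) / (?d * (real n)\<^sup>2 * ?C\<^sup>2 * (sin (T x))\<^sup>2)" for x :: "real^'d"
    unfolding VarM_def dir2 expect_MM[OF assms(2)] expect_M[OF assms(2)] T_def
    by (simp add: power_mult_distrib)
  have T_theta: "real n * sqrt ?d * (v1 \<bullet> x) = T x" for x :: "real^'d"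
    using theta_eq[of x] by (simp add: T_def mult.assoc)
  have part1: "\<forall>x :: real^'d. dirM n F x \<noteq> 0 \<longrightarrow>
           (let d = real CARD('d); \<theta> = v1 \<bullet> x;
                c = F - (1 - F) / (2 ^ (CARD('d) * n) - 1) in
            VarM n F x = (1 - c\<^sup>2 * (cos (real n * sqrt d * \<theta>))\<^sup>2)
                         / (d * (real n)\<^sup>2 * c\<^sup>2 * (sin (real n * sqrt d * \<theta>))\<^sup>2))"
    unfolding Let_def T_theta VarM_eq by blast
  let ?A = "{x :: real^'d. dirM n F x \<noteq> 0}"
  have N2: "CARD('d) * n \<ge> 2" using assms(1,2)
    by (metis mult.right_neutral mult_le_mono)
  have big: "(2::real) ^ (CARD('d) * n) \<ge> 4"
  proof -
    have "(2::real) ^ (CARD('d) * n) \<ge> 2 ^ 2" by (rule power_increasing[OF N2]) simp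
    then show ?thesis by simp
  qed
  have p0: "(1 - F) / (2 ^ (CARD('d) * n) - 1) \<ge> 0" using big assms(4) by simp
  have p1: "(1 - F) / (2 ^ (CARD('d) * n) - 1) \<le> (1 - F) / 3"
  proof -
    have "(1 - F) / (2 ^ (CARD('d) * n) - 1) \<le> (1 - F) / 3"
      by (rule divide_left_mono) (use big assms(4) in auto)
    then show ?thesis by simp
  qed
  have p2: "(1 - F) / 3 \<le> 1 / 3" using assms(3) by simp
  have Cb: "?C < 1" "?C > -1" using p0 p1 p2 assms(3,4) by linarith+
  have C2: "?C\<^sup>2 < 1"
  proof -
    have "\<bar>?C\<bar> < 1" using Cb by linarith
    then have "\<bar>?C\<bar>\<^sup>2 < 1\<^sup>2" by (rule power_strict_mono) auto
    then show ?thesis by simp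
  qed
  have Tlim: "(T \<longlongrightarrow> 0) (at 0 within ?A)"
  proof -
    have "((\<lambda>x::real^'d. real n * (\<Sum>i\<in>UNIV. x $ i)) \<longlongrightarrow> real n * (\<Sum>i\<in>UNIV. (0::real^'d) $ i)) (at 0 within ?A)"
      by (intro tendsto_intros)
    then show ?thesis unfolding T_def by simp
  qed
  have num: "((\<lambda>x. 1 - ?C\<^sup>2 * (cos (T x))\<^sup>2) \<longlongrightarrow> 1 - ?C\<^sup>2 * (cos 0)\<^sup>2) (at 0 within ?A)"
    by (intro tendsto_intros Tlim)
  have den: "((\<lambda>x. ?d * (real n)\<^sup>2 * ?C\<^sup>2 * (sin (T x))\<^sup>2) \<longlongrightarrow> ?d * (real n)\<^sup>2 * ?C\<^sup>2 * (sin 0)\<^sup>2) (at 0 within ?A)"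
    by (intro tendsto_intros Tlim)
  have evA: "eventually (\<lambda>x. x \<in> ?A) (at 0 within ?A)"
    by (simp add: eventually_at_filter)
  have evpos: "eventually (\<lambda>x. 0 < ?d * (real n)\<^sup>2 * ?C\<^sup>2 * (sin (T x))\<^sup>2) (at 0 within ?A)"
  proof (rule eventually_mono[OF evA])
    fix x assume "x \<in> ?A"
    then have "\<bar>dirM n F x\<bar>\<^sup>2 > 0" by simp
    then show "0 < ?d * (real n)\<^sup>2 * ?C\<^sup>2 * (sin (T x))\<^sup>2" unfolding dir2 .
  qed
  have "filterlim (\<lambda>x. (1 - ?C\<^sup>2 * (cos (T x))\<^sup>2) / (?d * (real n)\<^sup>2 * ?C\<^sup>2 * (sin (T x))\<^sup>2)) at_top (at 0 within ?A)"
  proof (rule LIM_at_top_divide)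
    show "((\<lambda>x. 1 - ?C\<^sup>2 * (cos (T x))\<^sup>2) \<longlongrightarrow> 1 - ?C\<^sup>2) (at 0 within ?A)" using num by simp
    show "0 < 1 - ?C\<^sup>2" using C2 by simp
    show "((\<lambda>x. ?d * (real n)\<^sup>2 * ?C\<^sup>2 * (sin (T x))\<^sup>2) \<longlongrightarrow> 0) (at 0 within ?A)" using den by simp
  qed (rule evpos)
  moreover have "VarM n F = (\<lambda>x. (1 - ?C\<^sup>2 * (cos (T x))\<^sup>2) / (?d * (real n)\<^sup>2 * ?C\<^sup>2 * (sin (T x))\<^sup>2))"
    by (rule ext) (rule VarM_eq)
  ultimately have part2: "filterlim (VarM n F :: real^'d \<Rightarrow> real) at_top (at 0 within ?A)" by simp
  show ?thesis using part1 part2 by blast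
qed

end
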